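(* Let $\mathbb{F}$ be a field, $T$ a $(d,\mathbb{F})$-matrix-tree and $v$ a vertex of $T$. Let $T'=T-T_v$ be obtained by removing $v$ and all its descendants, and let $T''$ be obtained from $T$ by removing all leaves of $T_v$ labelled $L_C$. Then $M(A(T'))$ is isomorphic to $M(A(T''))$.
   Context: $T_v$ is the subtree of $T$ consisting of $v$ and all its descendants. The depth of a rooted tree is the number of edges on a longest root-to-leaf path. A $(d,\mathbb{F})$-matrix-tree is a rooted tree of depth at most $d$ with unary labels from $\{L_R,L_C\}\cup\{L_{i,\alpha}: i\in\{0,\dots,d\},\alpha\in\mathbb{F}\}$ such that: every node labelled $L_C$ is a leaf; every other non-root node is labelled $L_R$; each $L_C$-leaf at distance $k\le d$ from the root carries, for each $i\in\{0,\dots,k-1\}$, exactly one label $L_{i,\alpha}$. The matrix $A(T)$ has rows the $L_R$-nodes, columns the $L_C$-nodes, and entry at $(r,c)$ equal to $0$ if $r$ is not an ancestor of $c$, and equal to the unique $\alpha$ with $c$ labelled $L_{i,\alpha}$ if $r$ is an ancestor of $c$ at distance $i$ from the root. $M(B)$ denotes the column matroid of a matrix $B$. *)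

theory Defs
  imports Main
begin

datatype 'f label = LR | LC | Lab nat 'f

text \<open>A rooted tree is given by a finite node set V, a root r and a parent map par
  (the edges are {w, par w} for w in V - {r}); every node reaches the root.\<close>
definition rooted_tree :: "'v set \<Rightarrow> 'v \<Rightarrow> ('v \<Rightarrow> 'v) \<Rightarrow> bool" where
  "rooted_tree V r par \<longleftrightarrow> finite V \<and> r \<in> V \<and> (\<forall>w\<in>V - {r}. par w \<in> V)
     \<and> (\<forall>w\<in>V. \<exists>k. (par ^^ k) w = r)"

definition dist_root :: "'v \<Rightarrow> ('v \<Rightarrow> 'v) \<Rightarrow> 'v \<Rightarrow> nat" where
  "dist_root r par w = (LEAST k. (par ^^ k) w = r)"

definition is_leaf :: "'v set \<Rightarrow> 'v \<Rightarrow> ('v \<Rightarrow> 'v) \<Rightarrow> 'v \<Rightarrow> bool" where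
  "is_leaf V r par w \<longleftrightarrow> \<not> (\<exists>x\<in>V - {r}. par x = w)"

definition is_anc :: "'v \<Rightarrow> ('v \<Rightarrow> 'v) \<Rightarrow> 'v \<Rightarrow> 'v \<Rightarrow> bool" where
  "is_anc r par u w \<longleftrightarrow> (\<exists>k. 0 < k \<and> k \<le> dist_root r par w \<and> (par ^^ k) w = u)"

definition subtree :: "'v set \<Rightarrow> 'v \<Rightarrow> ('v \<Rightarrow> 'v) \<Rightarrow> 'v \<Rightarrow> 'v set" where
  "subtree V r par v = {w \<in> V. \<exists>k \<le> dist_root r par w. (par ^^ k) w = v}"

definition matrix_tree :: "nat \<Rightarrow> 'v set \<Rightarrow> 'v \<Rightarrow> ('v \<Rightarrow> 'v) \<Rightarrow> ('v \<Rightarrow> 'f label set) \<Rightarrow> bool" where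
  "matrix_tree d V r par lab \<longleftrightarrow>
     rooted_tree V r par
   \<and> (\<forall>w\<in>V. dist_root r par w \<le> d)
   \<and> (\<forall>w\<in>V. \<forall>i a. Lab i a \<in> lab w \<longrightarrow> i \<le> d)
   \<and> (\<forall>w\<in>V. LC \<in> lab w \<longrightarrow> is_leaf V r par w)
   \<and> (\<forall>w\<in>V - {r}. LC \<notin> lab w \<longrightarrow> LR \<in> lab w)
   \<and> (\<forall>w\<in>V. LC \<in> lab w \<longrightarrow> (\<forall>i < dist_root r par w. \<exists>!a. Lab i a \<in> lab w))"

text \<open>The matrix A(T) for the labelled tree on node set V (rows: L_R nodes, columns: L_C nodes).
  It is applied also to node sets of subtrees T', T'' (same root, parent map and labels).\<close>
definition mt_rows :: "'v set \<Rightarrow> ('v \<Rightarrow> 'f label set) \<Rightarrow> 'v set" where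
  "mt_rows V lab = {u \<in> V. LR \<in> lab u}"

definition mt_cols :: "'v set \<Rightarrow> ('v \<Rightarrow> 'f label set) \<Rightarrow> 'v set" where
  "mt_cols V lab = {c \<in> V. LC \<in> lab c}"

definition mt_entry :: "'v \<Rightarrow> ('v \<Rightarrow> 'v) \<Rightarrow> ('v \<Rightarrow> 'f::zero label set) \<Rightarrow> 'v \<Rightarrow> 'v \<Rightarrow> 'f" where
  "mt_entry r par lab u c =
     (if is_anc r par u c then (THE a. Lab (dist_root r par u) a \<in> lab c) else 0)"

definition col_matroid :: "'r set \<Rightarrow> 'c set \<Rightarrow> ('r \<Rightarrow> 'c \<Rightarrow> 'f::field) \<Rightarrow> 'c set \<times> ('c set \<Rightarrow> bool)" where
  "col_matroid R C B = (C, \<lambda>S. S \<subseteq> C \<and> finite S \<and>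
      (\<forall>g. (\<forall>u\<in>R. (\<Sum>c\<in>S. g c * B u c) = 0) \<longrightarrow> (\<forall>c\<in>S. g c = 0)))"

definition matroid_iso :: "'a set \<times> ('a set \<Rightarrow> bool) \<Rightarrow> 'b set \<times> ('b set \<Rightarrow> bool) \<Rightarrow> bool" where
  "matroid_iso M N \<longleftrightarrow> (\<exists>f. bij_betw f (fst M) (fst N) \<and>
      (\<forall>S \<subseteq> fst M. snd M S \<longleftrightarrow> snd N (f ` S)))"

definition mt_matroid :: "'v set \<Rightarrow> 'v \<Rightarrow> ('v \<Rightarrow> 'v) \<Rightarrow> ('v \<Rightarrow> 'f::field label set) \<Rightarrow> 'v set \<times> ('v set \<Rightarrow> bool)" where
  "mt_matroid V r par lab = col_matroid (mt_rows V lab) (mt_cols V lab) (mt_entry r par lab)"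

end

theory Submission
  imports Defs
begin

lemma iso_refl: "matroid_iso M M"
  unfolding matroid_iso_def by (rule exI[of _ id]) auto

lemma anc_sub:
  assumes rt: "rooted_tree V r par" and c: "c \<in> V"
    and anc: "is_anc r par u c" and uT: "u \<in> subtree V r par v"
  shows "c \<in> subtree V r par v"
proof -
  obtain k where k: "0 < k" "k \<le> dist_root r par c" "(par ^^ k) c = u"
    using anc unfolding is_anc_def by blast
  obtain j where j: "j \<le> dist_root r par u" "(par ^^ j) u = v"
    using uT unfolding subtree_def by blast
  have ex: "\<exists>m. (par ^^ m) c = r" using rt c unfolding rooted_tree_def by blast
  have dc: "(par ^^ dist_root r par c) c = r"
    unfolding dist_root_def using LeastI_ex[OF ex] .
  have "(par ^^ (dist_root r par c - k)) u = r"
    using dc k by (metis funpow_add le_add_diff_inverse2 comp_apply)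
  hence "dist_root r par u \<le> dist_root r par c - k"
    unfolding dist_root_def by (rule Least_le)
  hence le: "j + k \<le> dist_root r par c" using j k by linarith
  have "(par ^^ (j + k)) c = v" using j k by (simp add: funpow_add)
  thus ?thesis using le c unfolding subtree_def by blast
qed

theorem lemma14:
  fixes d :: nat and V :: "'v set" and r v :: 'v and par :: "'v \<Rightarrow> 'v"
    and lab :: "'v \<Rightarrow> ('f::field) label set"
  assumes "matrix_tree d V r par lab" and "v \<in> V"
  shows "matroid_iso
           (mt_matroid (V - subtree V r par v) r par lab)
           (mt_matroid (V - {w \<in> subtree V r par v. is_leaf V r par w \<and> LC \<in> lab w}) r par lab)"
proof -
  let ?T = "subtree V r par v"
  let ?A = "V - ?T"
  let ?B = "V - {w \<in> ?T. is_leaf V r par w \<and> LC \<in> lab w}"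
  have rt: "rooted_tree V r par" using assms(1) unfolding matrix_tree_def by blast
  have lf: "\<And>w. w \<in> V \<Longrightarrow> LC \<in> lab w \<Longrightarrow> is_leaf V r par w"
    using assms(1) unfolding matrix_tree_def by blast
  have cols: "mt_cols ?A lab = mt_cols ?B lab"
    unfolding mt_cols_def using lf by auto
  have rsub: "mt_rows ?A lab \<subseteq> mt_rows ?B lab"
    unfolding mt_rows_def by auto
  have zero: "mt_entry r par lab u c = 0"
    if "u \<in> mt_rows ?B lab" "u \<notin> mt_rows ?A lab" "c \<in> mt_cols ?A lab" for u c
  proof -
    have "u \<in> ?T" using that(1,2) unfolding mt_rows_def by auto
    moreover have "c \<in> V" "c \<notin> ?T" using that(3) unfolding mt_cols_def by auto
    ultimately have "\<not> is_anc r par u c" using anc_sub[OF rt] by blast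
    thus ?thesis unfolding mt_entry_def by simp
  qed
  have key: "(\<forall>u\<in>mt_rows ?A lab. (\<Sum>c\<in>S. g c * mt_entry r par lab u c) = 0) \<longleftrightarrow>
     (\<forall>u\<in>mt_rows ?B lab. (\<Sum>c\<in>S. g c * mt_entry r par lab u c) = 0)"
    if S: "S \<subseteq> mt_cols ?A lab" for S and g :: "'v \<Rightarrow> 'f"
  proof
    assume g: "\<forall>u\<in>mt_rows ?A lab. (\<Sum>c\<in>S. g c * mt_entry r par lab u c) = 0"
    show "\<forall>u\<in>mt_rows ?B lab. (\<Sum>c\<in>S. g c * mt_entry r par lab u c) = 0"
    proof
      fix u assume u: "u \<in> mt_rows ?B lab"
      show "(\<Sum>c\<in>S. g c * mt_entry r par lab u c) = 0"
      proof (cases "u \<in> mt_rows ?A lab")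
        case True thus ?thesis using g by blast
      next
        case False
        have "\<forall>c\<in>S. mt_entry r par lab u c = 0" using zero[OF u False] S by blast
        thus ?thesis by simp
      qed
    qed
  next
    assume "\<forall>u\<in>mt_rows ?B lab. (\<Sum>c\<in>S. g c * mt_entry r par lab u c) = 0"
    thus "\<forall>u\<in>mt_rows ?A lab. (\<Sum>c\<in>S. g c * mt_entry r par lab u c) = 0"
      using rsub by blast
  qed
  have eq: "mt_matroid ?A r par lab = mt_matroid ?B r par lab"
    unfolding mt_matroid_def col_matroid_def cols[symmetric]
  proof (intro arg_cong[where f="Pair _"] ext)
    fix S
    show "(S \<subseteq> mt_cols ?A lab \<and> finite S \<and>
      (\<forall>g. (\<forall>u\<in>mt_rows ?A lab. (\<Sum>c\<in>S. g c * mt_entry r par lab u c) = 0) \<longrightarrow> (\<forall>c\<in>S. g c = 0))) =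
      (S \<subseteq> mt_cols ?A lab \<and> finite S \<and>
      (\<forall>g. (\<forall>u\<in>mt_rows ?B lab. (\<Sum>c\<in>S. g c * mt_entry r par lab u c) = 0) \<longrightarrow> (\<forall>c\<in>S. g c = 0)))"
    proof (cases "S \<subseteq> mt_cols ?A lab")
      case True
      show ?thesis by (simp only: key[OF True])
    next
      case False thus ?thesis by simp
    qed
  qed
  show ?thesis unfolding eq by (rule iso_refl)
qed

end
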